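(* Let $X\in\mathbb{R}^{n\times d}$, $y\in\mathbb{R}^n$, and let $g:\mathbb{R}^d\to(-\infty,\infty]$ be a proper lower semicontinuous convex function with $g(k\beta)=kg(\beta)$ for all $k\ge0$, $\beta\in\mathbb{R}^d$, such that there exists $\beta\in\mathrm{relint}(\mathrm{dom}(g))$ and $P(\beta):=\frac12\|y-X\beta\|_2^2+g(\beta)$ attains its infimum. Let $D(\theta)=-\frac12\|\theta\|_2^2+y^\top\theta-g^\star(X^\top\theta)$ be the Fenchel–Rockafellar dual objective and $\hat\theta$ a maximizer of $D$. Let $\tilde\beta\in\mathbb{R}^d$ and $\tilde\theta\in\mathrm{dom}(D)$. Then $\hat\theta$ belongs to \[ \mathcal{R}^{\mathrm{DS}}(\tilde\beta,\tilde\theta):=\Big\{\theta\ \Big|\ \Big\|\theta-\tfrac12(\tilde\theta+y)\Big\|_2^2\le\tfrac14\|\tilde\theta-y\|_2^2\ \land\ 0\le g(\tilde\beta)-\theta^\top X\tilde\beta\Big\}. \]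
   Context: $g^\star(v)=\sup_\beta v^\top\beta-g(\beta)$ is the Fenchel conjugate; $\mathrm{dom}(h)=\{z:|h(z)|<\infty\}$; $\mathrm{relint}$ is relative interior. *)

theory Defs
  imports "HOL-Analysis.Analysis" "HOL-Library.Extended_Real"
begin

definition edom :: "('a \<Rightarrow> ereal) \<Rightarrow> 'a set" where
  "edom h = {z. \<bar>h z\<bar> < \<infinity>}"

definition proper_fun :: "('a \<Rightarrow> ereal) \<Rightarrow> bool" where
  "proper_fun g \<longleftrightarrow> (\<forall>x. g x \<noteq> -\<infinity>) \<and> (\<exists>x. g x \<noteq> \<infinity>)"

definition lsc_fun :: "('a::topological_space \<Rightarrow> ereal) \<Rightarrow> bool" where
  "lsc_fun g \<longleftrightarrow> (\<forall>x. g x \<le> Liminf (at x) g)"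

definition convex_efun :: "('a::real_vector \<Rightarrow> ereal) \<Rightarrow> bool" where
  "convex_efun g \<longleftrightarrow>
     (\<forall>x y u. 0 < u \<and> u < 1 \<longrightarrow>
        g (u *\<^sub>R x + (1 - u) *\<^sub>R y) \<le> ereal u * g x + ereal (1 - u) * g y)"

definition fenchel_conj :: "('a::real_inner \<Rightarrow> ereal) \<Rightarrow> 'a \<Rightarrow> ereal" where
  "fenchel_conj g v = (SUP \<beta>. ereal (v \<bullet> \<beta>) - g \<beta>)"

definition primal_obj :: "real^'d^'n \<Rightarrow> real^'n \<Rightarrow> (real^'d \<Rightarrow> ereal) \<Rightarrow> real^'d \<Rightarrow> ereal" where
  "primal_obj X y g \<beta> = ereal (1/2 * (norm (y - X *v \<beta>))\<^sup>2) + g \<beta>"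

definition dual_obj :: "real^'d^'n \<Rightarrow> real^'n \<Rightarrow> (real^'d \<Rightarrow> ereal) \<Rightarrow> real^'n \<Rightarrow> ereal" where
  "dual_obj X y g \<theta> = ereal (- 1/2 * (norm \<theta>)\<^sup>2 + y \<bullet> \<theta>) - fenchel_conj g (transpose X *v \<theta>)"

end

theory Submission
  imports Defs
begin

lemma conj_in:
  assumes homog: "\<And>k \<beta>. k \<ge> 0 \<Longrightarrow> g (k *\<^sub>R \<beta>) = ereal k * g \<beta>"
    and C: "\<forall>\<beta>. ereal (v \<bullet> \<beta>) \<le> g \<beta>"
  shows "fenchel_conj g v = 0"
proof -
  have g0: "g 0 = 0" using homog[of 0 0] by (simp add: zero_ereal_def[symmetric])
  have "(SUP \<beta>. ereal (v \<bullet> \<beta>) - g \<beta>) \<le> 0"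
  proof (rule SUP_least)
    fix \<beta> show "ereal (v \<bullet> \<beta>) - g \<beta> \<le> 0"
      using C[rule_format, of \<beta>]
      by (cases "g \<beta>") auto
  qed
  moreover have "ereal (v \<bullet> 0) - g 0 \<le> (SUP \<beta>. ereal (v \<bullet> \<beta>) - g \<beta>)"
    by (rule SUP_upper) auto
  ultimately show ?thesis unfolding fenchel_conj_def using g0 by (intro antisym) (auto simp: zero_ereal_def[symmetric])
qed

lemma conj_out:
  assumes homog: "\<And>k \<beta>. k \<ge> 0 \<Longrightarrow> g (k *\<^sub>R \<beta>) = ereal k * g \<beta>"
    and proper: "\<And>x. g x \<noteq> -\<infinity>"
    and C: "\<not> (\<forall>\<beta>. ereal (v \<bullet> \<beta>) \<le> g \<beta>)"
  shows "fenchel_conj g v = \<infinity>"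
proof -
  obtain \<beta> where b: "g \<beta> < ereal (v \<bullet> \<beta>)" using C by (auto simp: not_le)
  then obtain r where r: "g \<beta> = ereal r" using proper[of \<beta>]
    by (cases "g \<beta>") auto
  define d where "d = v \<bullet> \<beta> - r"
  have d: "d > 0" using b r d_def by simp
  let ?S = "(SUP \<beta>. ereal (v \<bullet> \<beta>) - g \<beta>)"
  have big: "ereal (k * d) \<le> ?S" if k: "k \<ge> 0" for k
  proof -
    have "ereal (v \<bullet> (k *\<^sub>R \<beta>)) - g (k *\<^sub>R \<beta>) \<le> ?S" by (rule SUP_upper) auto
    moreover have "ereal (v \<bullet> (k *\<^sub>R \<beta>)) - g (k *\<^sub>R \<beta>) = ereal (k * d)"
      using homog[OF k, of \<beta>] r by (simp add: d_def algebra_simps)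
    ultimately show ?thesis by simp
  qed
  show ?thesis
  proof (rule ccontr)
    assume ne: "fenchel_conj g v \<noteq> \<infinity>"
    have "ereal 0 \<le> ?S" using big[of 0] by simp
    then obtain s where s: "?S = ereal s" using ne unfolding fenchel_conj_def
      by (cases ?S) auto
    have "ereal (((\<bar>s\<bar> + 1) / d) * d) \<le> ?S" using d by (intro big) auto
    then show False using s d by simp
  qed
qed

lemma small_t:
  fixes a c :: real
  assumes "\<And>t. 0 < t \<Longrightarrow> t \<le> 1 \<Longrightarrow> 0 \<le> 2 * a + t * c"
  shows "0 \<le> a"
proof (rule ccontr)
  assume a: "\<not> 0 \<le> a"
  have c: "c > 0" using assms[of 1] a by simp
  define t where "t = min 1 (- a / c)"
  have t: "0 < t" "t \<le> 1" using a c by (auto simp: t_def divide_neg_pos)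
  have "t * c \<le> - a" using c by (simp add: t_def min_def field_simps split: if_splits)
  then show False using assms[OF t] a by simp
qed

theorem theorem6:
  fixes X :: "real^'d^'n" and y :: "real^'n" and g :: "real^'d \<Rightarrow> ereal"
    and \<theta>hat :: "real^'n" and \<beta>t :: "real^'d" and \<theta>t :: "real^'n"
  assumes proper: "proper_fun g"
    and lsc: "lsc_fun g"
    and convex: "convex_efun g"
    and homog: "\<And>k \<beta>. k \<ge> 0 \<Longrightarrow> g (k *\<^sub>R \<beta>) = ereal k * g \<beta>"
    and relint: "rel_interior (edom g) \<noteq> {}"
    and attains: "\<exists>\<beta>0. \<forall>\<beta>. primal_obj X y g \<beta>0 \<le> primal_obj X y g \<beta>"
    and dual_max: "\<And>\<theta>. dual_obj X y g \<theta> \<le> dual_obj X y g \<theta>hat"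
    and dom_t: "\<theta>t \<in> edom (dual_obj X y g)"
  shows "(norm (\<theta>hat - (1/2) *\<^sub>R (\<theta>t + y)))\<^sup>2 \<le> 1/4 * (norm (\<theta>t - y))\<^sup>2
         \<and> 0 \<le> g \<beta>t - ereal (\<theta>hat \<bullet> (X *v \<beta>t))"
proof -
  have pr: "\<And>x. g x \<noteq> -\<infinity>" using proper unfolding proper_fun_def by auto
  define K where "K = {\<theta>. \<forall>\<beta>. ereal ((transpose X *v \<theta>) \<bullet> \<beta>) \<le> g \<beta>}"
  define f where "f = (\<lambda>\<theta>::real^'n. - 1/2 * (norm \<theta>)\<^sup>2 + y \<bullet> \<theta>)"
  have Din: "dual_obj X y g \<theta> = ereal (f \<theta>)" if "\<theta> \<in> K" for \<theta>
    using conj_in[OF homog] that unfolding dual_obj_def K_def f_def by simp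
  have Dout: "dual_obj X y g \<theta> = -\<infinity>" if "\<theta> \<notin> K" for \<theta>
    using conj_out[OF homog pr] that unfolding dual_obj_def K_def f_def by simp
  have tK: "\<theta>t \<in> K" using dom_t Dout unfolding edom_def by force
  have hK: "\<theta>hat \<in> K" using dual_max[of \<theta>t] Din[OF tK] Dout by force
  have Kconv: "(1 - t) *\<^sub>R \<theta>hat + t *\<^sub>R \<theta>t \<in> K" if t: "0 \<le> t" "t \<le> 1" for t
  proof -
    { fix \<beta>
      have e1: "ereal ((transpose X *v \<theta>hat) \<bullet> \<beta>) \<le> g \<beta>" using hK K_def by auto
      have e2: "ereal ((transpose X *v \<theta>t) \<bullet> \<beta>) \<le> g \<beta>" using tK K_def by auto
      have lin: "(transpose X *v ((1 - t) *\<^sub>R \<theta>hat + t *\<^sub>R \<theta>t)) \<bullet> \<beta>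
          = (1 - t) * ((transpose X *v \<theta>hat) \<bullet> \<beta>) + t * ((transpose X *v \<theta>t) \<bullet> \<beta>)"
        by (simp add: matrix_vector_right_distrib matrix_vector_mult_scaleR inner_add_left)
      have "ereal ((transpose X *v ((1 - t) *\<^sub>R \<theta>hat + t *\<^sub>R \<theta>t)) \<bullet> \<beta>) \<le> g \<beta>"
      proof (cases "g \<beta>")
        case (real r)
        have "(1 - t) * ((transpose X *v \<theta>hat) \<bullet> \<beta>) \<le> (1 - t) * r"
          using e1 real t by (intro mult_left_mono) auto
        moreover have "t * ((transpose X *v \<theta>t) \<bullet> \<beta>) \<le> t * r"
          using e2 real t by (intro mult_left_mono) auto
        ultimately show ?thesis using real lin by (simp add: algebra_simps)
      qed (use pr in auto) }
    then show ?thesis unfolding K_def by auto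
  qed
  have key: "0 \<le> (\<theta>hat - y) \<bullet> (\<theta>t - \<theta>hat)"
  proof (rule small_t[where c = "(norm (\<theta>t - \<theta>hat))\<^sup>2"])
    fix t :: real assume t: "0 < t" "t \<le> 1"
    have "ereal (f ((1 - t) *\<^sub>R \<theta>hat + t *\<^sub>R \<theta>t)) \<le> ereal (f \<theta>hat)"
      using dual_max[of "(1 - t) *\<^sub>R \<theta>hat + t *\<^sub>R \<theta>t"] Din[OF Kconv] Din[OF hK] t by simp
    then have le: "f ((1 - t) *\<^sub>R \<theta>hat + t *\<^sub>R \<theta>t) \<le> f \<theta>hat" by simp
    have eq: "(1 - t) *\<^sub>R \<theta>hat + t *\<^sub>R \<theta>t = \<theta>hat + t *\<^sub>R (\<theta>t - \<theta>hat)"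
      by (simp add: algebra_simps)
    have "f (\<theta>hat + t *\<^sub>R (\<theta>t - \<theta>hat)) = f \<theta>hat
        - t * ((\<theta>hat - y) \<bullet> (\<theta>t - \<theta>hat)) - t\<^sup>2 / 2 * (norm (\<theta>t - \<theta>hat))\<^sup>2"
      unfolding f_def power2_norm_eq_inner
      by (simp add: inner_add_left inner_add_right inner_diff_left inner_diff_right
          inner_commute power2_eq_square algebra_simps)
    then have "0 \<le> t * ((\<theta>hat - y) \<bullet> (\<theta>t - \<theta>hat)) + t\<^sup>2 / 2 * (norm (\<theta>t - \<theta>hat))\<^sup>2"
      using le eq by simp
    then have "0 \<le> t * (2 * ((\<theta>hat - y) \<bullet> (\<theta>t - \<theta>hat)) + t * (norm (\<theta>t - \<theta>hat))\<^sup>2)"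
      by (simp add: power2_eq_square algebra_simps)
    then show "0 \<le> 2 * ((\<theta>hat - y) \<bullet> (\<theta>t - \<theta>hat)) + t * (norm (\<theta>t - \<theta>hat))\<^sup>2"
      using t by (simp add: zero_le_mult_iff)
  qed
  have part1: "(norm (\<theta>hat - (1/2) *\<^sub>R (\<theta>t + y)))\<^sup>2 \<le> 1/4 * (norm (\<theta>t - y))\<^sup>2"
  proof -
    have "(norm (\<theta>hat - (1/2) *\<^sub>R (\<theta>t + y)))\<^sup>2 - 1/4 * (norm (\<theta>t - y))\<^sup>2
        = - ((\<theta>hat - y) \<bullet> (\<theta>t - \<theta>hat))"
      unfolding power2_norm_eq_inner
      by (simp add: inner_add_left inner_add_right inner_diff_left inner_diff_right
          inner_commute algebra_simps)
    then show ?thesis using key by simp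
  qed
  have part2: "0 \<le> g \<beta>t - ereal (\<theta>hat \<bullet> (X *v \<beta>t))"
  proof -
    have "ereal ((transpose X *v \<theta>hat) \<bullet> \<beta>t) \<le> g \<beta>t" using hK K_def by auto
    moreover have "(transpose X *v \<theta>hat) \<bullet> \<beta>t = \<theta>hat \<bullet> (X *v \<beta>t)"
      by (simp add: dot_lmul_matrix)
    ultimately show ?thesis using pr[of \<beta>t] by (cases "g \<beta>t") auto
  qed
  show ?thesis using part1 part2 by simp
qed

end
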